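(* Let $q\geq 0$ and $n\geq 0$ be integers. Paul has a winning strategy for the $q$-round pathological liar game with $1$ lie and initial state $(n,0)$ if and only if $$2^q\leq\begin{cases} n(q+1) & \text{if $n$ is even},\\ n(q+1)-(q-1) & \text{if $n$ is odd}.\end{cases}$$
   Context: Pathological liar game with $k=1$ lie: a state is a pair $(x_0,x_1)$ of nonnegative integers. In each of $q$ rounds Paul chooses a legal question $(a_0,a_1)$ with integers $0\leq a_i\leq x_i$, and Carole answers Y or N; the new state is $(a_0,\,a_1+x_0-a_0)$ after Y, or $(x_0-a_0,\,x_1-a_1+a_0)$ after N. Paul wins iff after $q$ rounds $x_0+x_1\geq 1$. *)

theory Defs
  imports Main
begin

definition yes_state :: "nat \<times> nat \<Rightarrow> nat \<times> nat \<Rightarrow> nat \<times> nat" where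
  "yes_state x a = (fst a, snd a + fst x - fst a)"

definition no_state :: "nat \<times> nat \<Rightarrow> nat \<times> nat \<Rightarrow> nat \<times> nat" where
  "no_state x a = (fst x - fst a, snd x - snd a + fst a)"

fun paul_wins :: "nat \<Rightarrow> nat \<times> nat \<Rightarrow> bool" where
  "paul_wins 0 x = (fst x + snd x \<ge> 1)"
| "paul_wins (Suc q) x =
     (\<exists>a0 a1. a0 \<le> fst x \<and> a1 \<le> snd x \<and>
        paul_wins q (yes_state x (a0, a1)) \<and> paul_wins q (no_state x (a0, a1)))"

end

theory Submission
  imports Defs
begin

lemma pow_big: "5 \<le> q \<Longrightarrow> q*q + q < (2::nat)^q"
proof (induction q rule: dec_induct)
  case base then show ?case by simp
next
  case (step n)
  have a: "2*n + 2 \<le> n*n + n" using step(1)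
    by (metis add_le_mono le_add2 le_trans mult_le_mono1 numeral_le_iff semiring_norm(68,69,72) mult_2 nat_le_linear le_add1 less_or_eq_imp_le) 
  have "Suc n * Suc n + Suc n = n*n + n + (2*n + 2)" by (simp add: algebra_simps)
  also have "\<dots> < 2^n + 2^n" using step(3) a by linarith
  finally show ?case by simp
qed

lemma pow_sq: "int q * int q \<le> 2^q + 3"
proof -
  have "q*q \<le> 2^q + 3"
  proof (cases "q \<le> 4")
    case True then have "q = 0 \<or> q = 1 \<or> q = 2 \<or> q = 3 \<or> q = 4" by linarith
    then show ?thesis by auto
  next
    case False then show ?thesis using pow_big[of q] by linarith
  qed
  then have "int (q*q) \<le> int (2^q + 3)" by linarith
  then show ?thesis by simp
qed

lemma pow_big_int: "5 \<le> q \<Longrightarrow> int q * int q + int q < 2^q"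
proof -
  assume "5 \<le> q"
  then have "q*q + q < 2^q" by (rule pow_big)
  then have "int (q*q + q) < int (2^q)" by linarith
  then show ?thesis by simp
qed


definition cnd :: "nat \<Rightarrow> nat \<Rightarrow> nat \<Rightarrow> bool" where
  "cnd q x0 x1 \<longleftrightarrow> (2::int)^q \<le> int x0 * (int q + 1) + int x1 \<and>
     (odd x0 \<longrightarrow> (2::int)^q + int q - 1 \<le> int x0 * (int q + 1) + 2 * int x1)"

lemma nec: "paul_wins q (x0, x1) \<Longrightarrow> cnd q x0 x1"
proof (induction q arbitrary: x0 x1)
  case 0
  then show ?case by (simp add: cnd_def)
next
  case (Suc q)
  from Suc.prems obtain a0 a1 where h: "a0 \<le> x0" "a1 \<le> x1"
    "paul_wins q (yes_state (x0, x1) (a0, a1))" "paul_wins q (no_state (x0, x1) (a0, a1))"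
    by auto
  have y: "cnd q a0 (a1 + (x0 - a0))" using Suc.IH[of a0 "a1 + (x0 - a0)"] h
    by (simp add: yes_state_def)
  have z: "cnd q (x0 - a0) (x1 - a1 + a0)" using Suc.IH[of "x0 - a0" "x1 - a1 + a0"] h
    by (simp add: no_state_def)
  define A where "A = int a0"
  define B where "B = int x0 - A"
  define C where "C = int a1"
  define D where "D = int x1 - C"
  define Q where "Q = int q"
  define T where "T = (2::int)^q"
  have x0e: "int x0 = A + B" and x1e: "int x1 = C + D" by (simp_all add: A_def B_def C_def D_def)
  have B0: "B \<ge> 0" "D \<ge> 0" "A \<ge> 0" "C \<ge> 0" using h by (simp_all add: A_def B_def C_def D_def)
  have Wy: "T \<le> A * (Q + 1) + (C + B)" using y h
    by (simp add: cnd_def A_def B_def C_def Q_def T_def of_nat_diff)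
  have Wz: "T \<le> B * (Q + 1) + (D + A)" using z h
    by (simp add: cnd_def A_def B_def C_def D_def Q_def T_def of_nat_diff)
  have g1: "2 * T \<le> (A + B) * (Q + 2) + (C + D)" using Wy Wz by (simp add: algebra_simps)
  have g2: "2 * T + Q \<le> (A + B) * (Q + 2) + 2 * (C + D)" if "odd x0"
  proof -
    have "a0 \<noteq> x0 - a0"
    proof
      assume "a0 = x0 - a0"
      then have "x0 = 2 * a0" using h by linarith
      then show False using that by simp
    qed
    then have "A \<noteq> B" using h by (simp add: A_def B_def of_nat_diff)
    then consider "A + 1 \<le> B" | "B + 1 \<le> A" by linarith
    then show ?thesis
    proof cases
      case 1
      then have "(B - A) * Q \<ge> 1 * Q" using B0 by (intro mult_right_mono) (auto simp: Q_def)
      then show ?thesis using Wy B0 by (simp add: algebra_simps)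
    next
      case 2
      then have "(A - B) * Q \<ge> 1 * Q" using B0 by (intro mult_right_mono) (auto simp: Q_def)
      then show ?thesis using Wz B0 by (simp add: algebra_simps)
    qed
  qed
  show ?case using g1 g2 unfolding cnd_def x0e[symmetric] x1e[symmetric] T_def Q_def
    by (auto simp: algebra_simps)
qed


lemma half_le: "(2::int) * a \<le> 2 * b + 1 \<Longrightarrow> a \<le> b" by linarith

definition smallQT :: "int \<Rightarrow> int \<Rightarrow> bool" where
  "smallQT Q T \<longleftrightarrow> (Q = 0 \<and> T = 1) \<or> (Q = 1 \<and> T = 2) \<or> (Q = 2 \<and> T = 4) \<or> (Q = 3 \<and> T = 8) \<or> (Q = 4 \<and> T = 16)"

lemma oddA_gen:
  fixes H X Q T :: int
  assumes "H \<ge> 0" "X \<ge> 0" "X \<le> Q" "Q \<ge> 0" "Q * Q \<le> T + 3"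
    "Q \<ge> 5 \<Longrightarrow> Q * Q + Q < T" "Q \<le> 4 \<Longrightarrow> smallQT Q T"
    "2 * T + Q \<le> (2 * H + 1) * (Q + 2) + 2 * X"
  shows "T \<le> H * (Q + 1) + (X + H + 1)"
    "T + Q - 1 \<le> H * (Q + 1) + 2 * (X + H + 1)"
    "T \<le> (H + 1) * (Q + 1) + H"
    "T + Q - 1 \<le> (H + 1) * (Q + 1) + 2 * H"
proof -
  have yw: "T \<le> H * (Q + 2) + X + 1"
    using assms(8) by (simp add: algebra_simps)
  then show "T \<le> H * (Q + 1) + (X + H + 1)" by (simp add: algebra_simps)
  show "T \<le> (H + 1) * (Q + 1) + H" using yw assms(3) by (simp add: algebra_simps)
  show "T + Q - 1 \<le> H * (Q + 1) + 2 * (X + H + 1)"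
  proof (cases "H + X \<ge> Q - 2")
    case True
    then show ?thesis using yw assms(2) by (simp add: algebra_simps)
  next
    case False
    then have "(H + X) * (Q + 2) \<le> (Q - 3) * (Q + 2)"
      using assms(4) by (intro mult_right_mono) auto
    moreover have "X * 1 \<le> X * (Q + 2)" using assms(2,4) by (intro mult_left_mono) auto
    ultimately show ?thesis using yw assms(4,5) by (simp add: algebra_simps)
  qed
  show "T + Q - 1 \<le> (H + 1) * (Q + 1) + 2 * H"
  proof (cases "H \<ge> Q - 1")
    case True
    then show ?thesis using yw assms(3) by (simp add: algebra_simps)
  next
    case False
    show ?thesis
    proof (cases "Q \<ge> 5")
      case True
      have "H * (Q + 2) \<le> (Q - 2) * (Q + 2)"
        using False assms(4) by (intro mult_right_mono) auto
      then show ?thesis using yw assms(3) assms(6)[OF True] by (simp add: algebra_simps)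
    next
      case c: False
      then have "Q \<le> 4" by simp
      have hH: "H = 0 \<or> H = 1 \<or> H = 2" using False \<open>Q \<le> 4\<close> assms(1) by linarith
      show ?thesis using assms(7)[OF \<open>Q \<le> 4\<close>] hH yw assms(2,3) False
        unfolding smallQT_def by (elim disjE conjE) (simp_all, linarith?)
    qed
  qed
qed

lemma oddB_gen:
  fixes H X M R Q T :: int
  assumes "H \<ge> 0" "X \<ge> Q + 1" "X + Q = 2 * M + R" "0 \<le> R" "R \<le> 1" "Q \<ge> 0"
    "Q \<ge> 5 \<Longrightarrow> Q * Q + Q < T" "Q \<le> 4 \<Longrightarrow> smallQT Q T"
    "2 * T \<le> (2 * H + 1) * (Q + 2) + X"
  shows "T \<le> H * (Q + 1) + (M + H + 1)"
    "T + Q - 1 \<le> H * (Q + 1) + 2 * (M + H + 1)"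
    "T \<le> (H + 1) * (Q + 1) + (X - M + H)"
    "T + Q - 1 \<le> (H + 1) * (Q + 1) + 2 * (X - M + H)"
proof -
  have "2 * T \<le> 2 * (H * (Q + 2) + 1 + M) + 1"
    using assms(3,5,9) by (simp add: algebra_simps)
  then have yw: "T \<le> H * (Q + 2) + 1 + M" by (rule half_le)
  have mQ: "M \<ge> Q" using assms(2,3,5) by linarith
  show "T \<le> H * (Q + 1) + (M + H + 1)" using yw by (simp add: algebra_simps)
  show "T + Q - 1 \<le> H * (Q + 1) + 2 * (M + H + 1)" using yw mQ assms(1) by (simp add: algebra_simps)
  show "T \<le> (H + 1) * (Q + 1) + (X - M + H)" using yw assms(3,4) by (simp add: algebra_simps)
  show "T + Q - 1 \<le> (H + 1) * (Q + 1) + 2 * (X - M + H)"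
  proof (cases "H + M + 2 * R \<ge> 2 * Q - 1")
    case True
    then show ?thesis using yw assms(3) by (simp add: algebra_simps)
  next
    case False
    then have hq: "H \<le> Q - 2" using mQ assms(4) by linarith
    show ?thesis
    proof (cases "Q \<ge> 5")
      case True
      have "H * (Q + 1) \<le> (Q - 2) * (Q + 1)"
        using hq assms(6) by (intro mult_right_mono) auto
      then show ?thesis using yw False assms(1,3,4) assms(7)[OF True] by (simp add: algebra_simps)
    next
      case c: False
      then have "Q \<le> 4" by simp
      have hH: "H = 0 \<or> H = 1 \<or> H = 2" using hq \<open>Q \<le> 4\<close> assms(1) by linarith
      have hR: "R = 0 \<or> R = 1" using assms(4,5) by linarith
      show ?thesis using assms(8)[OF \<open>Q \<le> 4\<close>] hH hR yw assms(3) mQ False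
        unfolding smallQT_def by (elim disjE conjE) (simp_all, linarith?)
    qed
  qed
qed
lemma even_gen:
  fixes H M R Q T :: int
  assumes "H \<ge> 0" "M \<ge> 0" "0 \<le> R" "R \<le> 1" "Q \<ge> 0" "Q * Q \<le> T + 3"
    "2 * T \<le> 2 * H * (Q + 2) + 2 * M + R"
  shows "T \<le> H * (Q + 1) + (M + H)"
    "T + Q - 1 \<le> H * (Q + 1) + 2 * (M + H)"
proof -
  have "2 * T \<le> 2 * (H * (Q + 2) + M) + 1" using assms(4,7) by (simp add: algebra_simps)
  then have e1: "T \<le> H * (Q + 2) + M" by (rule half_le)
  then show "T \<le> H * (Q + 1) + (M + H)" by (simp add: algebra_simps)
  show "T + Q - 1 \<le> H * (Q + 1) + 2 * (M + H)"
  proof (cases "H \<ge> Q - 1")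
    case True
    then show ?thesis using e1 assms(2) by (simp add: algebra_simps)
  next
    case False
    then have "H * (Q + 1) \<le> (Q - 2) * (Q + 1)"
      using assms(5) by (intro mult_right_mono) auto
    then show ?thesis using e1 assms(6) by (simp add: algebra_simps)
  qed
qed

lemma cnd_mono: "cnd q x0 x1 \<Longrightarrow> x1 \<le> x1' \<Longrightarrow> cnd q x0 x1'"
  unfolding cnd_def by auto

lemma small_q: "q \<le> 4 \<Longrightarrow> q = 0 \<or> q = 1 \<or> q = 2 \<or> q = 3 \<or> q = (4::nat)" by linarith

lemma pow_facts:
  shows "int q * int q \<le> 2^q + 3"
    "int q \<ge> 5 \<Longrightarrow> int q * int q + int q < 2^q"
    "int q \<le> 4 \<Longrightarrow> smallQT (int q) (2^q)"
proof -
  show "int q * int q \<le> 2^q + 3" by (rule pow_sq)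
  show "int q \<ge> 5 \<Longrightarrow> int q * int q + int q < 2^q" by (intro pow_big_int) simp
  show "int q \<le> 4 \<Longrightarrow> smallQT (int q) (2^q)"
  proof -
    assume "int q \<le> 4"
    then have "q \<le> 4" by simp
    then show ?thesis using small_q[of q] by (auto simp: smallQT_def)
  qed
qed

lemma suff: "cnd q x0 x1 \<Longrightarrow> paul_wins q (x0, x1)"
proof (induction q arbitrary: x0 x1)
  case 0
  then show ?case by (simp add: cnd_def)
next
  case (Suc q)
  define h where "h = x0 div 2"
  note P = pow_facts[of q]
  have c1: "2 * 2^q \<le> int x0 * (int q + 2) + int x1"
    using Suc.prems by (simp add: cnd_def algebra_simps)
  have c2: "odd x0 \<Longrightarrow> 2 * 2^q + int q \<le> int x0 * (int q + 2) + 2 * int x1"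
    using Suc.prems by (simp add: cnd_def algebra_simps)
  obtain a1 where a1: "a1 \<le> x1" "cnd q h (a1 + (x0 - h))" "cnd q (x0 - h) (x1 - a1 + h)"
  proof (cases "even x0")
    case True
    then have x0e: "x0 = 2 * h" by (simp add: h_def)
    define m where "m = x1 div 2"
    define r where "r = x1 mod 2"
    have "x1 = 2 * m + r" unfolding m_def r_def by presburger
    then have x1e: "int x1 = 2 * int m + int r" by simp
    have r1: "int r \<le> 1" by (simp add: r_def)
    have hyp: "2 * 2^q \<le> 2 * int h * (int q + 2) + 2 * int m + int r"
      using c1 x1e x0e by (simp add: algebra_simps)
    note E = even_gen[OF _ _ _ r1 _ P(1) hyp]
    have y: "cnd q h (m + h)" using E unfolding cnd_def by simp
    have z: "cnd q h (x1 - m + h)"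
      by (rule cnd_mono[OF y]) (simp add: m_def)
    show ?thesis
      by (rule that[of m]) (use y z x0e in \<open>auto simp: m_def\<close>)
  next
    case False
    then have x0e: "x0 = 2 * h + 1" by (simp add: h_def)
    have c2': "2 * 2^q + int q \<le> (2 * int h + 1) * (int q + 2) + 2 * int x1"
      using c2 False x0e by (simp add: add.commute)
    show ?thesis
    proof (cases "x1 \<le> q")
      case True
      note A = oddA_gen[of "int h" "int x1" "int q" "2^q", OF _ _ _ _ P c2']
      have y: "cnd q h (x1 + (h + 1))" using A True unfolding cnd_def by (simp add: algebra_simps)
      have z: "cnd q (h + 1) h" using A True unfolding cnd_def by (simp add: algebra_simps)
      show ?thesis
        by (rule that[of x1]) (use y z x0e in auto)
    next
      case False
      define m where "m = (x1 + q) div 2"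
      define r where "r = (x1 + q) mod 2"
      have "x1 + q = 2 * m + r" unfolding m_def r_def by presburger
      then have me: "int x1 + int q = 2 * int m + int r" by simp
      have r1: "int r \<le> 1" by (simp add: r_def)
      have mx: "m \<le> x1" using False by (simp add: m_def)
      have c1': "2 * 2^q \<le> (2 * int h + 1) * (int q + 2) + int x1" using c1 x0e by (simp add: add.commute)
      have X: "int x1 \<ge> int q + 1" using False by simp
      note B = oddB_gen[OF _ X me _ r1 _ P(2,3) c1']
      have y: "cnd q h (m + (h + 1))" using B unfolding cnd_def by (simp add: algebra_simps)
      have z: "cnd q (h + 1) (x1 - m + h)" using B mx unfolding cnd_def
        by (simp add: algebra_simps of_nat_diff)
      show ?thesis
        by (rule that[of m]) (use y z x0e mx in auto)
    qed
  qed
  have hx: "h \<le> x0" by (simp add: h_def)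
  show ?case
    unfolding paul_wins.simps
    apply (rule exI[of _ h], rule exI[of _ a1])
    using a1 hx Suc.IH by (simp add: yes_state_def no_state_def)
qed

theorem theorem9:
  fixes q n :: nat
  shows "paul_wins q (n, 0) \<longleftrightarrow>
    (if even n then 2 ^ q \<le> int n * (int q + 1)
     else 2 ^ q \<le> int n * (int q + 1) - (int q - 1))"
proof -
  have "paul_wins q (n, 0) \<longleftrightarrow> cnd q n 0" using nec suff by blast
  also have "\<dots> \<longleftrightarrow> (if even n then 2 ^ q \<le> int n * (int q + 1)
     else 2 ^ q \<le> int n * (int q + 1) - (int q - 1))"
  proof (cases "even n")
    case True then show ?thesis by (simp add: cnd_def)
  next
    case False
    then have "n \<ge> 1" by (cases n) auto
    have "(2::int) ^ q \<ge> 1" by simp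
    show ?thesis
    proof (cases "q = 0")
      case True then show ?thesis using False \<open>n \<ge> 1\<close> by (simp add: cnd_def)
    next
      case q0: False
      then show ?thesis using False by (auto simp: cnd_def algebra_simps)
    qed
  qed
  finally show ?thesis .
qed

end
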